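(* Let $F$ be a minimally unsatisfiable clause-set and $v$ a singular variable for $F$ with singular literal $x$, main clause $C$ and side clauses $D_1,\dots,D_m$. Let $F'$ be obtained from $F$ by replacing each $D_i$ by $D_i \cup (C\setminus\{x\})$ ($i=1,\dots,m$). Then each $D_i\cup(C\setminus\{x\})$ is a clause (contains no complementary pair), and $F'$ is a partial saturation of $F$.
   Context: Literals are variables $v$ and complements $\overline{v}$; a clause is a finite set of literals with no complementary pair; a clause-set is a finite set of clauses; $\mathrm{var}(F)$ is the set of variables of $F$; $\mathrm{ldeg}_F(x)$ is the number of clauses of $F$ containing literal $x$. $\mathrm{MU}$ is the set of minimally unsatisfiable clause-sets. A variable $v$ is singular for $F$ if $\min(\mathrm{ldeg}_F(v),\mathrm{ldeg}_F(\overline{v}))=1$; a singular literal for $v$ is a literal $x$ with $\mathrm{var}(x)=v$ and $\mathrm{ldeg}_F(x)=1$ (if both polarities qualify, one is chosen); the main clause is the unique $C\in F$ with $x\in C$, and the side clauses are the clauses $D\in F$ with $\overline{x}\in D$. A partial saturation of $F\in\mathrm{MU}$ is a clause-set $F'\in\mathrm{MU}$ with $\mathrm{var}(F')=\mathrm{var}(F)$ such that there is a bijection $\alpha:F\to F'$ with $C\subseteq\alpha(C)$ for all $C\in F$. *)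

theory Defs
  imports Main
begin

datatype 'v lit = Pos 'v | Neg 'v

fun var_lit :: "'v lit \<Rightarrow> 'v" where
  "var_lit (Pos v) = v" | "var_lit (Neg v) = v"

fun comp :: "'v lit \<Rightarrow> 'v lit" where
  "comp (Pos v) = Neg v" | "comp (Neg v) = Pos v"

type_synonym 'v clause = "'v lit set"

definition is_clause :: "'v clause \<Rightarrow> bool" where
  "is_clause C \<longleftrightarrow> finite C \<and> (\<forall>y\<in>C. comp y \<notin> C)"

definition is_clause_set :: "'v clause set \<Rightarrow> bool" where
  "is_clause_set F \<longleftrightarrow> finite F \<and> (\<forall>C\<in>F. is_clause C)"

definition vars :: "'v clause set \<Rightarrow> 'v set" where
  "vars F = (\<Union>C\<in>F. var_lit ` C)"

definition ldeg :: "'v clause set \<Rightarrow> 'v lit \<Rightarrow> nat" where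
  "ldeg F y = card {C\<in>F. y \<in> C}"

fun lit_true :: "('v \<Rightarrow> bool) \<Rightarrow> 'v lit \<Rightarrow> bool" where
  "lit_true \<phi> (Pos v) = \<phi> v" | "lit_true \<phi> (Neg v) = (\<not> \<phi> v)"

definition satisfiable :: "'v clause set \<Rightarrow> bool" where
  "satisfiable F \<longleftrightarrow> (\<exists>\<phi>. \<forall>C\<in>F. \<exists>y\<in>C. lit_true \<phi> y)"

definition MU :: "'v clause set set" where
  "MU = {F. is_clause_set F \<and> \<not> satisfiable F \<and> (\<forall>G. G \<subset> F \<longrightarrow> satisfiable G)}"

definition singular_var :: "'v clause set \<Rightarrow> 'v \<Rightarrow> bool" where
  "singular_var F v \<longleftrightarrow> min (ldeg F (Pos v)) (ldeg F (Neg v)) = 1"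

definition singular_lit :: "'v clause set \<Rightarrow> 'v lit \<Rightarrow> bool" where
  "singular_lit F x \<longleftrightarrow> singular_var F (var_lit x) \<and> ldeg F x = 1"

definition partial_saturation :: "'v clause set \<Rightarrow> 'v clause set \<Rightarrow> bool" where
  "partial_saturation F F' \<longleftrightarrow> F' \<in> MU \<and> vars F' = vars F \<and>
     (\<exists>\<alpha>. bij_betw \<alpha> F F' \<and> (\<forall>C\<in>F. C \<subseteq> \<alpha> C))"

end

theory Submission
  imports Defs
begin

lemma var_eq_cases: "var_lit l = var_lit x \<Longrightarrow> l = x \<or> l = comp x"
  by (cases l; cases x) auto

lemma comp_comp[simp]: "comp (comp l) = l" by (cases l) auto

lemma flip:
  assumes uniq: "\<forall>E\<in>F. x \<in> E \<longrightarrow> E = C"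
    and CF: "C \<in> F" and xC: "x \<in> C" and cC: "is_clause C"
    and sat: "\<forall>E\<in>F. comp x \<notin> E \<longrightarrow> (\<exists>y\<in>E. lit_true \<phi> y)"
    and zC: "z \<in> C" and zx: "z \<noteq> x" and zt: "lit_true \<phi> z"
  shows "satisfiable F"
proof -
  define \<psi> where "\<psi> v = (if v = var_lit x then (case x of Pos _ \<Rightarrow> False | Neg _ \<Rightarrow> True) else \<phi> v)" for v
  have same: "lit_true \<psi> l = lit_true \<phi> l" if "var_lit l \<noteq> var_lit x" for l
    using that by (cases l) (auto simp: \<psi>_def)
  have cx: "lit_true \<psi> (comp x)" by (cases x) (auto simp: \<psi>_def)
  have ncx: "comp x \<notin> C" using cC xC unfolding is_clause_def by auto
  have zv: "var_lit z \<noteq> var_lit x" using var_eq_cases[of z x] zx zC ncx by auto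
  show ?thesis unfolding satisfiable_def
  proof (intro exI ballI)
    fix E assume E: "E \<in> F"
    show "\<exists>y\<in>E. lit_true \<psi> y"
    proof (cases "comp x \<in> E")
      case True thus ?thesis using cx by blast
    next
      case False
      show ?thesis
      proof (cases "E = C")
        case True thus ?thesis using zC zt same zv by blast
      next
        case ne: False
        then have "x \<notin> E" using uniq E by blast
        moreover obtain y where "y \<in> E" "lit_true \<phi> y" using sat E False by blast
        ultimately show ?thesis using var_eq_cases[of y x] False same by metis
      qed
    qed
  qed
qed

theorem corollary11:
  fixes F :: "'v clause set" and x :: "'v lit" and C :: "'v clause"
  assumes "F \<in> MU"
    and "singular_lit F x"
    and "C \<in> F" and "x \<in> C"
  shows "(\<forall>D\<in>{D\<in>F. comp x \<in> D}. is_clause (D \<union> (C - {x})))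
         \<and> partial_saturation F
             ((F - {D\<in>F. comp x \<in> D}) \<union> (\<lambda>D. D \<union> (C - {x})) ` {D\<in>F. comp x \<in> D})"
proof -
  note CF = assms(3) and xC = assms(4)
  have cs: "is_clause_set F" and unsat: "\<not> satisfiable F" and mini: "\<And>G. G \<subset> F \<Longrightarrow> satisfiable G"
    using assms(1) unfolding MU_def by auto
  have fin: "finite F" using cs unfolding is_clause_set_def by auto
  have cl: "\<And>E. E \<in> F \<Longrightarrow> is_clause E" using cs unfolding is_clause_set_def by auto
  have "card {E\<in>F. x \<in> E} = 1" using assms(2) unfolding singular_lit_def ldeg_def by auto
  then obtain E0 where E0: "{E\<in>F. x \<in> E} = {E0}" by (rule card_1_singletonE)
  have uniq: "\<forall>E\<in>F. x \<in> E \<longrightarrow> E = C"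
  proof (intro ballI impI)
    fix E assume "E \<in> F" "x \<in> E"
    hence "E \<in> {E\<in>F. x \<in> E}" by simp
    hence "E = E0" using E0 by simp
    moreover have "C \<in> {E\<in>F. x \<in> E}" using CF xC by simp
    hence "C = E0" using E0 by simp
    ultimately show "E = C" by simp
  qed
  have cC: "is_clause C" using cl CF .
  have ncx: "comp x \<notin> C" using cC xC unfolding is_clause_def by auto
  define S where "S = {D\<in>F. comp x \<in> D}"
  define \<alpha> where "\<alpha> D = (if comp x \<in> D then D \<union> (C - {x}) else D)" for D
  have side_fail: "\<exists>\<phi>. (\<forall>E\<in>F. comp x \<notin> E \<longrightarrow> (\<exists>y\<in>E. lit_true \<phi> y)) \<and> (\<forall>E\<in>F. E \<noteq> D \<longrightarrow> (\<exists>y\<in>E. lit_true \<phi> y))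
        \<and> (\<forall>y\<in>D. \<not> lit_true \<phi> y)" if D: "D \<in> F" and Dx: "comp x \<in> D" for D
  proof -
    have "F - {D} \<subset> F" using D by blast
    then obtain \<phi> where \<phi>: "\<forall>E\<in>F - {D}. \<exists>y\<in>E. lit_true \<phi> y" using mini unfolding satisfiable_def by blast
    have "\<forall>y\<in>D. \<not> lit_true \<phi> y"
      using unsat \<phi> unfolding satisfiable_def by (metis DiffI singletonD)
    moreover have "\<forall>E\<in>F. E \<noteq> D \<longrightarrow> (\<exists>y\<in>E. lit_true \<phi> y)" using \<phi> by blast
    moreover have "\<forall>E\<in>F. comp x \<notin> E \<longrightarrow> (\<exists>y\<in>E. lit_true \<phi> y)" using \<phi> Dx by blast
    ultimately show ?thesis by blast
  qed
  have lit_comp: "lit_true \<phi> (comp l) = (\<not> lit_true \<phi> l)" for \<phi> l by (cases l) auto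
  have part1: "is_clause (D \<union> (C - {x}))" if D: "D \<in> F" "comp x \<in> D" for D
  proof -
    have fD: "finite D" "finite C" using cl[OF D(1)] cC unfolding is_clause_def by auto
    have nc: "\<forall>y\<in>D \<union> (C - {x}). comp y \<notin> D \<union> (C - {x})"
    proof (rule ccontr)
      assume "\<not> ?thesis"
      then obtain y where y: "y \<in> D" "comp y \<in> C - {x}"
        using cl[OF D(1)] cC unfolding is_clause_def by (metis Un_iff Diff_iff comp_comp)
      obtain \<phi> where \<phi>: "\<forall>E\<in>F. comp x \<notin> E \<longrightarrow> (\<exists>y\<in>E. lit_true \<phi> y)" "\<forall>y\<in>D. \<not> lit_true \<phi> y"
        using side_fail[OF D(1) D(2)] by blast
      have "lit_true \<phi> (comp y)" using y \<phi>(2) lit_comp by blast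
      hence "satisfiable F" using flip[OF uniq CF xC cC \<phi>(1), of "comp y"] y by blast
      thus False using unsat by blast
    qed
    show ?thesis using fD nc unfolding is_clause_def by auto
  qed
  have Feq: "(F - S) \<union> (\<lambda>D. D \<union> (C - {x})) ` S = \<alpha> ` F"
    unfolding S_def \<alpha>_def by (auto simp: image_iff)
  have sub: "\<And>D. D \<subseteq> \<alpha> D" unfolding \<alpha>_def by auto
  have inj: "inj_on \<alpha> F"
  proof (rule inj_onI)
    fix D1 D2 assume D1: "D1 \<in> F" and D2: "D2 \<in> F" and eq: "\<alpha> D1 = \<alpha> D2"
    show "D1 = D2"
    proof (rule ccontr)
      assume ne: "D1 \<noteq> D2"
      have ncx': "comp x \<notin> C - {x}" using ncx by blast
      have c12: "comp x \<in> D1 \<longleftrightarrow> comp x \<in> D2" using eq ncx' unfolding \<alpha>_def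
        by (auto split: if_splits)
      have s1: "comp x \<in> D1" using c12 eq ne unfolding \<alpha>_def by (auto split: if_splits)
      hence s2: "comp x \<in> D2" using c12 by blast
      obtain \<phi> where \<phi>: "\<forall>E\<in>F. comp x \<notin> E \<longrightarrow> (\<exists>y\<in>E. lit_true \<phi> y)"
        "\<forall>E\<in>F. E \<noteq> D1 \<longrightarrow> (\<exists>y\<in>E. lit_true \<phi> y)" "\<forall>y\<in>D1. \<not> lit_true \<phi> y"
        using side_fail[OF D1 s1] by blast
      obtain z where z: "z \<in> D2" "lit_true \<phi> z" using \<phi>(2) D2 ne by metis
      have "z \<notin> D1" using z \<phi>(3) by blast
      moreover have "D1 \<union> (C - {x}) = D2 \<union> (C - {x})" using eq s1 s2 unfolding \<alpha>_def by auto
      ultimately have "z \<in> C - {x}" using z by blast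
      hence "satisfiable F" using flip[OF uniq CF xC cC \<phi>(1), of z] z by blast
      thus False using unsat by blast
    qed
  qed
  let ?F' = "\<alpha> ` F"
  have cs': "is_clause_set ?F'"
    unfolding is_clause_set_def
  proof (intro conjI ballI)
    show "finite ?F'" using fin by simp
    fix E assume "E \<in> ?F'"
    then obtain D where D: "D \<in> F" "E = \<alpha> D" by blast
    show "is_clause E"
    proof (cases "comp x \<in> D")
      case True thus ?thesis using part1[OF D(1) True] D(2) unfolding \<alpha>_def by simp
    next
      case False thus ?thesis using cl[OF D(1)] D(2) unfolding \<alpha>_def by simp
    qed
  qed
  have unsat': "\<not> satisfiable ?F'"
  proof
    assume "satisfiable ?F'"
    then obtain \<phi> where \<phi>0: "\<forall>E'\<in>?F'. \<exists>y\<in>E'. lit_true \<phi> y" unfolding satisfiable_def by (elim exE)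
    have \<phi>: "\<forall>E\<in>F. \<exists>y\<in>\<alpha> E. lit_true \<phi> y"
    proof
      fix E assume "E \<in> F"
      hence "\<alpha> E \<in> ?F'" by (rule imageI)
      thus "\<exists>y\<in>\<alpha> E. lit_true \<phi> y" using \<phi>0 by (rule bspec[rotated])
    qed
    have nside: "\<forall>E\<in>F. comp x \<notin> E \<longrightarrow> (\<exists>y\<in>E. lit_true \<phi> y)"
    proof (intro ballI impI)
      fix E assume "E \<in> F" "comp x \<notin> E"
      moreover have "\<alpha> E = E" using \<open>comp x \<notin> E\<close> unfolding \<alpha>_def by simp
      ultimately show "\<exists>y\<in>E. lit_true \<phi> y" using \<phi> by metis
    qed
    show False
    proof (cases "\<exists>z\<in>C - {x}. lit_true \<phi> z")
      case True
      then obtain z where z: "z \<in> C" "z \<noteq> x" "lit_true \<phi> z" by blast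
      have "satisfiable F" by (rule flip[OF uniq CF xC cC nside z])
      thus False using unsat by simp
    next
      case False
      have "\<forall>E\<in>F. \<exists>y\<in>E. lit_true \<phi> y"
      proof
        fix E assume E: "E \<in> F"
        show "\<exists>y\<in>E. lit_true \<phi> y"
          using \<phi> E False unfolding \<alpha>_def by (auto split: if_splits)
      qed
      thus False using unsat unfolding satisfiable_def by blast
    qed
  qed
  have min': "satisfiable G" if G: "G \<subset> ?F'" for G
  proof -
    obtain E' where E': "E' \<in> ?F'" "E' \<notin> G" using G by blast
    then obtain E where E: "E \<in> F" "E' = \<alpha> E" by blast
    have "F - {E} \<subset> F" using E by blast
    then obtain \<phi> where \<phi>: "\<forall>D\<in>F - {E}. \<exists>y\<in>D. lit_true \<phi> y" using mini unfolding satisfiable_def by blast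
    have "\<forall>D'\<in>G. \<exists>y\<in>D'. lit_true \<phi> y"
    proof
      fix D' assume D': "D' \<in> G"
      then obtain D where D: "D \<in> F" "D' = \<alpha> D" using G by blast
      have "D \<noteq> E" using D D' E E' by blast
      thus "\<exists>y\<in>D'. lit_true \<phi> y" using \<phi> D sub by blast
    qed
    thus ?thesis unfolding satisfiable_def by blast
  qed
  have vars': "vars ?F' = vars F"
  proof
    show "vars F \<subseteq> vars ?F'" unfolding vars_def using sub by blast
    show "vars ?F' \<subseteq> vars F" unfolding vars_def \<alpha>_def using CF by auto
  qed
  have ps: "partial_saturation F ?F'"
    unfolding partial_saturation_def MU_def
  proof (intro conjI CollectI exI)
    show "is_clause_set ?F'" by (rule cs')
    show "\<not> satisfiable ?F'" by (rule unsat')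
    show "\<forall>G. G \<subset> ?F' \<longrightarrow> satisfiable G" using min' by blast
    show "vars ?F' = vars F" by (rule vars')
    show "bij_betw \<alpha> F ?F'" using inj by (simp add: bij_betw_def)
    show "\<forall>C\<in>F. C \<subseteq> \<alpha> C" using sub by blast
  qed
  show ?thesis using part1 ps Feq unfolding S_def by auto
qed

end
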